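(* Let $G=(V,E)$ be a finite undirected graph and let $\mathcal C$ be a collection of odd cycles of $G$ that are pairwise edge-disjoint. Then every vertex (extreme point) of the polytope $$\Big\{x\in[0,1]^E:\ \sum_{e\in\delta(i)}x_e\le1\ \ \forall i\in V,\quad \sum_{e\in E(C)}x_e\le\tfrac{|C|-1}{2}\ \ \forall C\in\mathcal C\Big\}$$ is half-integral, i.e. lies in $\{0,\tfrac12,1\}^E$. In particular, for any edge weights the linear program maximizing $\sum_e w_e x_e$ over this polytope has a half-integral optimal solution.
   Context: $\delta(i)$ is the set of edges incident to vertex $i$; for a cycle $C$, $E(C)$ is its edge set and $|C|$ its length (number of vertices). *)

theory Defs
  imports Complex_Main
begin

definition graph :: "'a set \<Rightarrow> 'a set set \<Rightarrow> bool" where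
  "graph V E \<longleftrightarrow> finite V \<and> (\<forall>e\<in>E. e \<subseteq> V \<and> card e = 2)"

definition delta :: "'a set set \<Rightarrow> 'a \<Rightarrow> 'a set set" where
  "delta E i = {e \<in> E. i \<in> e}"

definition cycle_edges :: "'a list \<Rightarrow> 'a set set" where
  "cycle_edges C = {{C ! i, C ! ((i + 1) mod length C)} | i. i < length C}"

definition is_cycle :: "'a set \<Rightarrow> 'a set set \<Rightarrow> 'a list \<Rightarrow> bool" where
  "is_cycle V E C \<longleftrightarrow> length C \<ge> 3 \<and> distinct C \<and> set C \<subseteq> V \<and> cycle_edges C \<subseteq> E"

definition is_odd_cycle :: "'a set \<Rightarrow> 'a set set \<Rightarrow> 'a list \<Rightarrow> bool" where
  "is_odd_cycle V E C \<longleftrightarrow> is_cycle V E C \<and> odd (length C)"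

text \<open>The polytope, as a set of vectors x in R^E (functions vanishing outside E).\<close>
definition cycle_polytope :: "'a set \<Rightarrow> 'a set set \<Rightarrow> 'a list set \<Rightarrow> ('a set \<Rightarrow> real) set" where
  "cycle_polytope V E \<C> = {x.
      (\<forall>e. e \<notin> E \<longrightarrow> x e = 0) \<and>
      (\<forall>e\<in>E. 0 \<le> x e \<and> x e \<le> 1) \<and>
      (\<forall>i\<in>V. (\<Sum>e\<in>delta E i. x e) \<le> 1) \<and>
      (\<forall>C\<in>\<C>. (\<Sum>e\<in>cycle_edges C. x e) \<le> (real (length C) - 1) / 2)}"

definition extreme_point :: "('b \<Rightarrow> real) set \<Rightarrow> ('b \<Rightarrow> real) \<Rightarrow> bool" where
  "extreme_point P x \<longleftrightarrow> x \<in> P \<and>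
     (\<forall>y\<in>P. \<forall>z\<in>P. \<forall>t::real. 0 < t \<and> t < 1 \<and> y \<noteq> z \<longrightarrow> x \<noteq> (\<lambda>e. (1 - t) * y e + t * z e))"

definition half_integral :: "'b set \<Rightarrow> ('b \<Rightarrow> real) \<Rightarrow> bool" where
  "half_integral E x \<longleftrightarrow> (\<forall>e\<in>E. x e \<in> {0, 1/2, 1})"

end

theory Submission
  imports Defs "HOL-Library.FuncSet"
begin

lemma kernel_exists:
  fixes r :: "'j \<Rightarrow> 'e \<Rightarrow> real"
  assumes "finite U" "finite J" "card J < card U"
  shows "\<exists>d. (\<forall>e. e \<notin> U \<longrightarrow> d e = 0) \<and> (\<exists>e\<in>U. d e \<noteq> 0) \<and>
             (\<forall>j\<in>J. (\<Sum>e\<in>U. r j e * d e) = 0)"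
  using assms
proof (induction U arbitrary: J r rule: finite_induct)
  case empty
  then show ?case by simp
next
  case (insert e0 U)
  show ?case
  proof (cases "\<forall>j\<in>J. r j e0 = 0")
    case True
    define d where "d = (\<lambda>e. if e = e0 then (1::real) else 0)"
    have "(\<Sum>e\<in>insert e0 U. r j e * d e) = 0" if "j \<in> J" for j
      using insert(1,2) True that by (simp add: d_def sum.insert_if if_distrib cong: if_cong)
    then show ?thesis by (intro exI[of _ d]) (auto simp: d_def)
  next
    case False
    then obtain j0 where j0: "j0 \<in> J" "r j0 e0 \<noteq> 0" by auto
    define r' where "r' = (\<lambda>j e. r j e - (r j e0 / r j0 e0) * r j0 e)"
    have "card (J - {j0}) < card U"
      using insert j0 card_gt_0_iff[of J] by (auto simp: card_Diff_singleton)
    with insert.IH[of "J - {j0}" r'] insert.prems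
    obtain d' where d': "\<forall>e. e \<notin> U \<longrightarrow> d' e = 0" "\<exists>e\<in>U. d' e \<noteq> 0"
      "\<forall>j\<in>J - {j0}. (\<Sum>e\<in>U. r' j e * d' e) = 0" by auto
    define S0 where "S0 = (\<Sum>e\<in>U. r j0 e * d' e)"
    define d where "d = d'(e0 := - S0 / r j0 e0)"
    have dU: "(\<Sum>e\<in>U. r j e * d e) = (\<Sum>e\<in>U. r j e * d' e)" for j
      using insert(2) by (intro sum.cong) (auto simp: d_def)
    have de0: "d e0 = - S0 / r j0 e0" by (simp add: d_def)
    have "(\<Sum>e\<in>insert e0 U. r j e * d e) = 0" if j: "j \<in> J" for j
    proof (cases "j = j0")
      case True
      then show ?thesis using insert(1,2) j0 by (simp add: dU de0 S0_def[symmetric])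
    next
      case False
      have "(\<Sum>e\<in>U. r' j e * d' e) = (\<Sum>e\<in>U. r j e * d' e) - (r j e0 / r j0 e0) * S0"
        by (simp add: r'_def S0_def algebra_simps sum_subtractf sum_distrib_left)
      with d'(3) False j have "(\<Sum>e\<in>U. r j e * d' e) = (r j e0 / r j0 e0) * S0" by auto
      then show ?thesis using insert(1,2) j0 by (simp add: dU de0)
    qed
    moreover have "\<forall>e. e \<notin> insert e0 U \<longrightarrow> d e = 0" using d'(1) by (auto simp: d_def)
    moreover have "\<exists>e\<in>insert e0 U. d e \<noteq> 0" using d'(2) insert(2) by (auto simp: d_def)
    ultimately show ?thesis by blast
  qed
qed

lemma alt_telescope:
  fixes f :: "nat \<Rightarrow> real"
  shows "(\<Sum>m<N. (-1)^m * (f m + f (Suc m))) = f 0 - (-1)^N * f N"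
  by (induction N) (auto simp: algebra_simps)

lemma periodic_shift:
  fixes f :: "nat \<Rightarrow> real"
  assumes "\<And>i. f (i + n) = f i"
  shows "(\<Sum>m<n. f (a + m)) = (\<Sum>i<n. f i)"
proof (induction a)
  case 0 then show ?case by simp
next
  case (Suc a)
  have "(\<Sum>m<Suc n. f (a + m)) = f a + (\<Sum>m<n. f (Suc a + m))"
    by (subst sum.lessThan_Suc_shift) simp
  moreover have "(\<Sum>m<Suc n. f (a + m)) = (\<Sum>m<n. f (a + m)) + f (a + n)" by simp
  moreover have "f (a + n) = f a" using assms by simp
  ultimately show ?case using Suc by simp
qed

lemma pair_sum:
  fixes f :: "nat \<Rightarrow> real"
  shows "(\<Sum>m<2*k. f m) = (\<Sum>l<k. f (2*l) + f (2*l+1))"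
  by (induction k) (auto simp: add.assoc)

definition ed :: "'a list \<Rightarrow> nat \<Rightarrow> 'a set" where
  "ed C i = {C ! (i mod length C), C ! (Suc i mod length C)}"

definition Ev :: "'a list \<Rightarrow> 'a \<Rightarrow> 'a set set" where
  "Ev C v = {e \<in> cycle_edges C. v \<in> e}"

lemma cycle_edges_ed: "cycle_edges C = ed C ` {..<length C}"
  unfolding cycle_edges_def ed_def by (auto simp: mod_Suc_eq)

lemma ed_period: "ed C (i + length C) = ed C i"
  unfolding ed_def by (metis add_Suc mod_add_self2)

lemma ed_mod: "ed C (i mod length C) = ed C i"
  unfolding ed_def by (simp add: mod_Suc_eq)

lemma mod_eq_dvd_aux:
  fixes a b n :: nat
  assumes "a mod n = b mod n" "b \<le> a"
  shows "n dvd (a - b)"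
  using assms by (simp add: mod_eq_dvd_iff_nat)

lemma ed_inj:
  assumes "distinct C" "length C \<ge> 3"
  shows "inj_on (ed C) {..<length C}"
proof (rule inj_onI)
  fix i j assume i: "i \<in> {..<length C}" and j: "j \<in> {..<length C}" and eq: "ed C i = ed C j"
  let ?n = "length C"
  have n: "?n > 0" using assms by auto
  have ii: "i mod ?n = i" "j mod ?n = j" using i j by auto
  have si: "Suc i mod ?n < ?n" "Suc j mod ?n < ?n" using n by auto
  from eq have "(C!i = C!j \<and> C!(Suc i mod ?n) = C!(Suc j mod ?n)) \<or>
                (C!i = C!(Suc j mod ?n) \<and> C!(Suc i mod ?n) = C!j)"
    unfolding ed_def ii by (auto simp: doubleton_eq_iff)
  then show "i = j"
  proof
    assume "C!i = C!j \<and> C!(Suc i mod ?n) = C!(Suc j mod ?n)"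
    then show ?thesis using assms i j by (simp add: nth_eq_iff_index_eq)
  next
    assume a: "C!i = C!(Suc j mod ?n) \<and> C!(Suc i mod ?n) = C!j"
    then have 1: "i = Suc j mod ?n" and 2: "Suc i mod ?n = j"
      using assms i j si by (auto simp: nth_eq_iff_index_eq)
    show ?thesis
    proof (rule ccontr)
      assume "i \<noteq> j"
      have "Suc (Suc j) mod ?n = j" using 1 2 by (simp add: mod_Suc_eq)
      then have "Suc (Suc j) mod ?n = j mod ?n" using ii by simp
      then have "?n dvd 2" using mod_eq_dvd_aux[of "Suc (Suc j)" ?n j] by simp
      then show False using assms by (auto dest: dvd_imp_le)
    qed
  qed
qed

lemma ed_prev_ne:
  assumes "distinct C" "length C \<ge> 3" "i < length C"
  shows "ed C (i + length C - 1) \<noteq> ed C i"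
proof
  let ?n = "length C"
  assume eq: "ed C (i + ?n - 1) = ed C i"
  have "ed C ((i + ?n - 1) mod ?n) = ed C i" using eq by (simp add: ed_mod)
  then have "(i + ?n - 1) mod ?n = i"
    by (rule inj_onD[OF ed_inj[OF assms(1,2)]]) (use assms(3) in \<open>auto intro!: mod_less_divisor\<close>)
  moreover have "(i + ?n - 1) mod ?n \<noteq> i"
  proof (cases i)
    case 0 then show ?thesis using assms by auto
  next
    case (Suc k)
    then have "i + ?n - 1 = k + ?n" by simp
    then show ?thesis using Suc assms(3) by simp
  qed
  ultimately show False by simp
qed

lemma ed_in: "length C > 0 \<Longrightarrow> ed C i \<in> cycle_edges C"
  unfolding cycle_edges_ed by (metis ed_mod image_eqI lessThan_iff mod_less_divisor)

lemma Ev_nth: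
  assumes "distinct C" "length C \<ge> 3" "i < length C"
  shows "Ev C (C ! i) = {ed C (i + length C - 1), ed C i}"
proof -
  let ?n = "length C"
  have n: "?n > 0" using assms by auto
  have a: "C!i \<in> ed C i" using assms by (simp add: ed_def)
  have "Suc (i + ?n - 1) = i + ?n" using n by simp
  then have b: "C!i \<in> ed C (i + ?n - 1)" using assms by (simp add: ed_def)
  have "e \<in> {ed C (i + ?n - 1), ed C i}" if e: "e \<in> cycle_edges C" "C!i \<in> e" for e
  proof -
    obtain j where j: "j < ?n" "e = ed C j" using e unfolding cycle_edges_ed by auto
    have sj: "Suc j mod ?n < ?n" using n by simp
    from e j have "C!i = C!j \<or> C!i = C!(Suc j mod ?n)" by (auto simp: ed_def)
    then show ?thesis
    proof
      assume "C!i = C!j" then have "i = j" using assms j by (simp add: nth_eq_iff_index_eq)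
      then show ?thesis using j by simp
    next
      assume "C!i = C!(Suc j mod ?n)"
      then have ij: "i = Suc j mod ?n" using assms j sj by (simp add: nth_eq_iff_index_eq)
      have "(i + ?n - 1) mod ?n = j"
      proof (cases "Suc j = ?n")
        case True then show ?thesis using ij by simp
      next
        case False then have "i = Suc j" using ij j by simp
        then show ?thesis using j by simp
      qed
      then have "ed C (i + ?n - 1) = ed C j" by (metis ed_mod)
      then show ?thesis using j by simp
    qed
  qed
  then show ?thesis using a b ed_in[OF n] unfolding Ev_def by auto
qed

lemma card_Ev:
  assumes "distinct C" "length C \<ge> 3" "v \<in> set C"
  shows "card (Ev C v) = 2"
proof -
  obtain i where "i < length C" "v = C ! i" using assms(3) by (auto simp: in_set_conv_nth)
  then show ?thesis using Ev_nth[OF assms(1,2)] ed_prev_ne[OF assms(1,2)] by simp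
qed

lemma cycle_edge_subset: "e \<in> cycle_edges C \<Longrightarrow> e \<subseteq> set C"
  unfolding cycle_edges_def by (auto intro!: nth_mem mod_less_divisor)

lemma finite_cycle_edges: "finite (cycle_edges C)"
  unfolding cycle_edges_ed by simp

lemma ed_cong: "a mod length C = b mod length C \<Longrightarrow> ed C a = ed C b"
  unfolding ed_def by (metis mod_Suc_eq)

lemma Ev_consec:
  assumes "distinct C" "length C \<ge> 3"
  shows "Ev C (C ! (Suc i mod length C)) = {ed C i, ed C (Suc i)} \<and> ed C i \<noteq> ed C (Suc i)"
proof -
  let ?n = "length C"
  let ?i = "Suc i mod ?n"
  have n: "?n > 0" using assms by auto
  have i': "?i < ?n" using n by simp
  have "(?i + ?n - 1) mod ?n = i mod ?n"
  proof -
    have "?i + ?n - 1 = ?i + (?n - 1)" using n by linarith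
    then have "(?i + ?n - 1) mod ?n = (?i + (?n - 1)) mod ?n" by simp
    also have "\<dots> = (Suc i + (?n - 1)) mod ?n" by (simp add: mod_add_left_eq)
    also have "Suc i + (?n - 1) = i + ?n" using n by simp
    finally show ?thesis by simp
  qed
  then have e1: "ed C (?i + ?n - 1) = ed C i" by (rule ed_cong)
  have e2: "ed C ?i = ed C (Suc i)" by (rule ed_mod)
  show ?thesis using Ev_nth[OF assms i'] ed_prev_ne[OF assms i'] e1 e2 by auto
qed

locale cps =
  fixes V :: "'a set" and E :: "'a set set" and Cs :: "'a list set"
  assumes graph: "graph V E"
    and oddc: "\<forall>C\<in>Cs. is_odd_cycle V E C"
    and disj: "\<forall>C\<in>Cs. \<forall>D\<in>Cs. C \<noteq> D \<longrightarrow> cycle_edges C \<inter> cycle_edges D = {}"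
begin

abbreviation "P \<equiv> cycle_polytope V E Cs"

lemma finV: "finite V" using graph by (simp add: graph_def)
lemma EV: "e \<in> E \<Longrightarrow> e \<subseteq> V" using graph by (simp add: graph_def)
lemma card2: "e \<in> E \<Longrightarrow> card e = 2" using graph by (simp add: graph_def)
lemma finE: "finite E"
proof -
  have "E \<subseteq> Pow V" using EV by auto
  then show ?thesis using finV by (meson finite_Pow_iff finite_subset)
qed
lemma fin_delta: "finite (delta E v)" using finE by (simp add: delta_def)

lemma cyc:
  assumes "C \<in> Cs"
  shows "distinct C" "length C \<ge> 3" "odd (length C)" "set C \<subseteq> V" "cycle_edges C \<subseteq> E"
  using oddc assms by (auto simp: is_odd_cycle_def is_cycle_def)

lemma finCs: "finite Cs"
proof -
  have "Cs \<subseteq> {xs. set xs \<subseteq> V \<and> distinct xs}"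
  proof
    fix C assume "C \<in> Cs" then show "C \<in> {xs. set xs \<subseteq> V \<and> distinct xs}" using cyc[of C] by auto
  qed
  then show ?thesis using finite_subset_distinct[OF finV] finite_subset by blast
qed

lemma Ev_delta: "C \<in> Cs \<Longrightarrow> Ev C v \<subseteq> delta E v"
  using cyc(5) by (auto simp: Ev_def delta_def)

definition vfeas :: "('a set \<Rightarrow> real) \<Rightarrow> bool" where
  "vfeas z \<longleftrightarrow> (\<forall>e\<in>E. 0 \<le> z e) \<and> (\<forall>v\<in>V. (\<Sum>e\<in>delta E v. z e) \<le> 1)"

lemma P_vfeas: "y \<in> P \<Longrightarrow> vfeas y"
  by (simp add: cycle_polytope_def vfeas_def)

lemma Ev_sum_le:
  assumes "vfeas z" "C \<in> Cs" "v \<in> V"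
  shows "(\<Sum>e\<in>Ev C v. z e) \<le> 1"
proof -
  have "(\<Sum>e\<in>Ev C v. z e) \<le> (\<Sum>e\<in>delta E v. z e)"
    using assms Ev_delta[OF assms(2)] fin_delta
    by (intro sum_mono2) (auto simp: vfeas_def delta_def)
  then show ?thesis using assms by (auto simp: vfeas_def)
qed

lemma consec_le:
  assumes "vfeas z" "C \<in> Cs"
  shows "z (ed C i) + z (ed C (Suc i)) \<le> 1"
proof -
  have n: "length C > 0" using cyc[OF assms(2)] by auto
  have "C ! (Suc i mod length C) \<in> V" using cyc(4)[OF assms(2)] n by auto
  then have "(\<Sum>e\<in>Ev C (C ! (Suc i mod length C)). z e) \<le> 1" by (rule Ev_sum_le[OF assms])
  moreover have "Ev C (C ! (Suc i mod length C)) = {ed C i, ed C (Suc i)}" "ed C i \<noteq> ed C (Suc i)"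
    using Ev_consec[OF cyc(1,2)[OF assms(2)], of i] by auto
  ultimately show ?thesis by simp
qed

lemma sum_cycle_idx:
  assumes "C \<in> Cs"
  shows "(\<Sum>e\<in>cycle_edges C. z e) = (\<Sum>i<length C. z (ed C i))"
  unfolding cycle_edges_ed using ed_inj[OF cyc(1,2)[OF assms]] by (simp add: sum.reindex)

lemma path_lemma:
  assumes "vfeas z" "C \<in> Cs" "e0 \<in> cycle_edges C" "z e0 = 0"
  shows "(\<Sum>e\<in>cycle_edges C. z e) \<le> (real (length C) - 1) / 2"
proof -
  let ?n = "length C"
  obtain k where k: "?n = Suc (2*k)" using cyc(3)[OF assms(2)] by (metis oddE Suc_eq_plus1)
  obtain j where j: "j < ?n" "e0 = ed C j" using assms(3) unfolding cycle_edges_ed by auto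
  define f where "f i = z (ed C i)" for i
  have per: "f (i + ?n) = f i" for i by (simp add: f_def ed_period)
  have "(\<Sum>e\<in>cycle_edges C. z e) = (\<Sum>i<?n. f i)" by (simp add: sum_cycle_idx[OF assms(2)] f_def)
  also have "\<dots> = (\<Sum>m<?n. f (Suc j + m))" using periodic_shift[of f ?n, OF per, of "Suc j"] by simp
  also have "\<dots> = (\<Sum>m<2*k. f (Suc j + m)) + f (Suc j + 2*k)" by (simp add: k)
  also have "f (Suc j + 2*k) = f j" using per[of j] k by (simp add: add.commute)
  also have "f j = 0" using assms(4) j by (simp add: f_def)
  also have "(\<Sum>m<2*k. f (Suc j + m)) = (\<Sum>l<k. f (Suc j + 2*l) + f (Suc j + (2*l+1)))"
    by (rule pair_sum)
  also have "\<dots> \<le> (\<Sum>l<k. (1::real))"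
  proof (rule sum_mono)
    fix l
    have "Suc j + (2*l+1) = Suc (Suc j + 2*l)" by simp
    then show "f (Suc j + 2*l) + f (Suc j + (2*l+1)) \<le> 1"
      using consec_le[OF assms(1,2)] by (simp add: f_def)
  qed
  finally show ?thesis using k by simp
qed

end

context cps begin

definition U :: "('a set \<Rightarrow> real) \<Rightarrow> 'a set set" where
  "U y = {e\<in>E. 0 < y e \<and> y e < 1}"
definition tv :: "('a set \<Rightarrow> real) \<Rightarrow> 'a \<Rightarrow> bool" where
  "tv y v \<longleftrightarrow> (\<Sum>e\<in>delta E v. y e) = 1"
definition tc :: "('a set \<Rightarrow> real) \<Rightarrow> 'a list \<Rightarrow> bool" where
  "tc y C \<longleftrightarrow> (\<Sum>e\<in>cycle_edges C. y e) = (real (length C) - 1) / 2"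
definition good :: "('a set \<Rightarrow> real) \<Rightarrow> ('a set \<Rightarrow> real) \<Rightarrow> bool" where
  "good y d \<longleftrightarrow> (\<forall>e. e \<notin> U y \<longrightarrow> d e = 0) \<and> (\<forall>v\<in>V. tv y v \<longrightarrow> (\<Sum>e\<in>delta E v. d e) = 0)
     \<and> (\<forall>C\<in>Cs. tc y C \<and> cycle_edges C \<subseteq> U y \<longrightarrow> (\<Sum>e\<in>cycle_edges C. d e) = 0)"
definition NV where "NV y = {v\<in>V. \<not> tv y v}"
definition NC where "NC y = {C\<in>Cs. \<not> tc y C \<and> cycle_edges C \<subseteq> U y}"
definition meas :: "('a set \<Rightarrow> real) \<Rightarrow> nat" where
  "meas y = card (U y) + card (NV y) + card (NC y)"
definition mv :: "('a set \<Rightarrow> real) \<Rightarrow> ('a set \<Rightarrow> real) \<Rightarrow> real \<Rightarrow> ('a set \<Rightarrow> real)" where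
  "mv y d t = (\<lambda>e. y e + t * d e)"

lemma good_neg: "good y d \<Longrightarrow> good y (\<lambda>e. - d e)"
  unfolding good_def by (auto simp: sum_negf)

lemma sum_mv: "(\<Sum>e\<in>S. mv y d t e) = (\<Sum>e\<in>S. y e) + t * (\<Sum>e\<in>S. d e)"
  by (simp add: mv_def sum.distrib sum_distrib_left)

lemma P_bounds:
  assumes "y \<in> P"
  shows "\<And>e. e \<notin> E \<Longrightarrow> y e = 0" "\<And>e. e \<in> E \<Longrightarrow> 0 \<le> y e \<and> y e \<le> 1"
    "\<And>v. v \<in> V \<Longrightarrow> (\<Sum>e\<in>delta E v. y e) \<le> 1"
    "\<And>C. C \<in> Cs \<Longrightarrow> (\<Sum>e\<in>cycle_edges C. y e) \<le> (real (length C) - 1) / 2"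
  using assms by (auto simp: cycle_polytope_def)

lemma notU: "y \<in> P \<Longrightarrow> e \<in> E \<Longrightarrow> e \<notin> U y \<Longrightarrow> y e = 0 \<or> y e = 1"
  using P_bounds[of y] by (force simp: U_def)

lemma feas_step:
  assumes y: "y \<in> P" and g: "good y d"
    and bE: "\<forall>e\<in>U y. 0 \<le> mv y d t e \<and> mv y d t e \<le> 1"
    and bV: "\<forall>v\<in>V. \<not> tv y v \<longrightarrow> (\<Sum>e\<in>delta E v. mv y d t e) \<le> 1"
    and bC: "\<forall>C\<in>Cs. \<not> tc y C \<and> cycle_edges C \<subseteq> U y \<longrightarrow>
               (\<Sum>e\<in>cycle_edges C. mv y d t e) \<le> (real (length C) - 1) / 2"
  shows "mv y d t \<in> P"
proof -
  let ?z = "mv y d t"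
  have d0: "\<And>e. e \<notin> U y \<Longrightarrow> d e = 0" using g by (simp add: good_def)
  have z1: "?z e = 0" if "e \<notin> E" for e
    using that P_bounds(1)[OF y] d0[of e] by (simp add: mv_def U_def)
  have z2: "0 \<le> ?z e \<and> ?z e \<le> 1" if "e \<in> E" for e
  proof (cases "e \<in> U y")
    case True then show ?thesis using bE by auto
  next
    case False then show ?thesis using P_bounds(2)[OF y that] d0[of e] by (simp add: mv_def)
  qed
  have z3: "(\<Sum>e\<in>delta E v. ?z e) \<le> 1" if v: "v \<in> V" for v
  proof (cases "tv y v")
    case True
    then have "(\<Sum>e\<in>delta E v. d e) = 0" using g v by (simp add: good_def)
    then show ?thesis using True by (simp add: sum_mv tv_def)
  next
    case False then show ?thesis using bV v by auto
  qed
  have vf: "vfeas ?z" using z2 z3 by (simp add: vfeas_def)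
  have z4: "(\<Sum>e\<in>cycle_edges C. ?z e) \<le> (real (length C) - 1) / 2" if C: "C \<in> Cs" for C
  proof (cases "cycle_edges C \<subseteq> U y")
    case True
    show ?thesis
    proof (cases "tc y C")
      case True
      then have "(\<Sum>e\<in>cycle_edges C. d e) = 0" using g C \<open>cycle_edges C \<subseteq> U y\<close> by (simp add: good_def)
      then show ?thesis using True by (simp add: sum_mv tc_def)
    next
      case False then show ?thesis using bC C \<open>cycle_edges C \<subseteq> U y\<close> by auto
    qed
  next
    case False
    then obtain e where e: "e \<in> cycle_edges C" "e \<notin> U y" by auto
    have eE: "e \<in> E" using e cyc(5)[OF C] by auto
    have "\<exists>e'\<in>cycle_edges C. ?z e' = 0"
    proof (cases "y e = 0")
      case True then have "?z e = 0" using e d0[of e] by (simp add: mv_def)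
      then show ?thesis using e(1) by blast
    next
      case False
      then have ye: "y e = 1" using notU[OF y eE e(2)] by simp
      obtain j where j: "e = ed C j" using e unfolding cycle_edges_ed by auto
      have n: "length C > 0" using cyc(2)[OF C] by auto
      have nx: "ed C (Suc j) \<in> cycle_edges C" by (rule ed_in[OF n])
      have nxE: "ed C (Suc j) \<in> E" using nx cyc(5)[OF C] by auto
      have "y (ed C j) + y (ed C (Suc j)) \<le> 1" by (rule consec_le[OF P_vfeas[OF y] C])
      then have "y (ed C (Suc j)) = 0" using ye j P_bounds(2)[OF y nxE] by simp
      moreover then have "ed C (Suc j) \<notin> U y" by (simp add: U_def)
      ultimately have "?z (ed C (Suc j)) = 0" using d0 by (simp add: mv_def)
      then show ?thesis using nx by blast
    qed
    then show ?thesis using path_lemma[OF vf C] by blast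
  qed
  show ?thesis unfolding cycle_polytope_def using z1 z2 z3 z4 by blast
qed

end

context cps begin

lemma finU: "finite (U y)" using finE by (simp add: U_def)

lemma meas_sub:
  assumes g: "good y d"
  shows "U (mv y d t) \<subseteq> U y" "NV (mv y d t) \<subseteq> NV y" "NC (mv y d t) \<subseteq> NC y"
proof -
  have d0: "\<And>e. e \<notin> U y \<Longrightarrow> d e = 0" using g by (simp add: good_def)
  show U1: "U (mv y d t) \<subseteq> U y"
  proof
    fix e assume "e \<in> U (mv y d t)"
    then show "e \<in> U y" using d0[of e] by (cases "e \<in> U y") (auto simp: U_def mv_def)
  qed
  show "NV (mv y d t) \<subseteq> NV y"
  proof
    fix v assume v: "v \<in> NV (mv y d t)"
    show "v \<in> NV y"
    proof (rule ccontr)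
      assume "v \<notin> NV y"
      then have "tv y v" "v \<in> V" using v by (auto simp: NV_def)
      then have "(\<Sum>e\<in>delta E v. d e) = 0" using g by (simp add: good_def)
      then have "tv (mv y d t) v" using \<open>tv y v\<close> by (simp add: tv_def sum_mv)
      then show False using v by (simp add: NV_def)
    qed
  qed
  show "NC (mv y d t) \<subseteq> NC y"
  proof
    fix C assume C: "C \<in> NC (mv y d t)"
    then have CU: "cycle_edges C \<subseteq> U y" using U1 by (auto simp: NC_def)
    show "C \<in> NC y"
    proof (rule ccontr)
      assume "C \<notin> NC y"
      then have "tc y C" "C \<in> Cs" using C CU by (auto simp: NC_def)
      then have "(\<Sum>e\<in>cycle_edges C. d e) = 0" using g CU by (simp add: good_def)
      then have "tc (mv y d t) C" using \<open>tc y C\<close> by (simp add: tc_def sum_mv)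
      then show False using C by (simp add: NC_def)
    qed
  qed
qed

lemma le_div_pos: "(0::real) < b \<Longrightarrow> t \<le> a / b \<Longrightarrow> t * b \<le> a"
  by (simp add: pos_le_divide_eq)

lemma move:
  assumes y: "y \<in> P" and g: "good y d" and nz: "d e0 \<noteq> 0"
  shows "\<exists>l>0. (\<forall>t. 0 \<le> t \<and> t \<le> l \<longrightarrow> mv y d t \<in> P) \<and> meas (mv y d l) < meas y"
proof -
  have d0: "\<And>e. e \<notin> U y \<Longrightarrow> d e = 0" using g by (simp add: good_def)
  have e0U: "e0 \<in> U y" using d0 nz by blast
  define sv where "sv v = (\<Sum>e\<in>delta E v. d e)" for v
  define sc where "sc C = (\<Sum>e\<in>cycle_edges C. d e)" for C
  define yv where "yv v = (\<Sum>e\<in>delta E v. y e)" for v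
  define yc where "yc C = (\<Sum>e\<in>cycle_edges C. y e)" for C
  define bc where "bc C = (real (length C) - 1) / 2" for C :: "'a list"
  define A1 where "A1 = {e\<in>U y. d e < 0}"
  define A2 where "A2 = {e\<in>U y. d e > 0}"
  define A3 where "A3 = {v\<in>V. \<not> tv y v \<and> sv v > 0}"
  define A4 where "A4 = {C\<in>Cs. \<not> tc y C \<and> cycle_edges C \<subseteq> U y \<and> sc C > 0}"
  define Q where "Q = (\<lambda>e. y e / (- d e)) ` A1 \<union> (\<lambda>e. (1 - y e) / d e) ` A2
      \<union> (\<lambda>v. (1 - yv v) / sv v) ` A3 \<union> (\<lambda>C. (bc C - yc C) / sc C) ` A4"
  have finQ: "finite Q" unfolding Q_def A1_def A2_def A3_def A4_def
    using finU finV finCs by auto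
  have neQ: "Q \<noteq> {}"
  proof (cases "d e0 < 0")
    case True then have "e0 \<in> A1" using e0U by (simp add: A1_def)
    then show ?thesis by (auto simp: Q_def)
  next
    case False then have "e0 \<in> A2" using e0U nz by (simp add: A2_def)
    then show ?thesis by (auto simp: Q_def)
  qed
  have posQ: "q > 0" if "q \<in> Q" for q
  proof -
    have "yv v < 1" if "v \<in> A3" for v
      using that P_bounds(3)[OF y, of v] by (auto simp: A3_def yv_def tv_def)
    moreover have "yc C < bc C" if "C \<in> A4" for C
      using that P_bounds(4)[OF y, of C] by (auto simp: A4_def yc_def tc_def bc_def)
    ultimately show ?thesis using \<open>q \<in> Q\<close>
      by (auto simp: Q_def A1_def A2_def A3_def A4_def U_def divide_pos_neg)
  qed
  define l where "l = Min Q"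
  have lQ: "l \<in> Q" using finQ neQ by (simp add: l_def)
  have lpos: "l > 0" using posQ lQ by simp
  have lle: "l \<le> q" if "q \<in> Q" for q using finQ that by (simp add: l_def)
  have feas: "mv y d t \<in> P" if t: "0 \<le> t" "t \<le> l" for t
  proof (rule feas_step[OF y g])
    show "\<forall>e\<in>U y. 0 \<le> mv y d t e \<and> mv y d t e \<le> 1"
    proof
      fix e assume e: "e \<in> U y"
      consider "d e < 0" | "d e = 0" | "d e > 0" by linarith
      then show "0 \<le> mv y d t e \<and> mv y d t e \<le> 1"
      proof cases
        case 1
        then have "e \<in> A1" using e by (simp add: A1_def)
        then have "l \<le> y e / (- d e)" using lle by (auto simp: Q_def)
        then have "t * (- d e) \<le> y e" using 1 t by (intro le_div_pos) auto
        moreover have "t * d e \<le> 0" using 1 t by (simp add: mult_nonneg_nonpos)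
        ultimately show ?thesis using e by (auto simp: mv_def U_def)
      next
        case 2 then show ?thesis using e by (auto simp: mv_def U_def)
      next
        case 3
        then have "e \<in> A2" using e by (simp add: A2_def)
        then have "l \<le> (1 - y e) / d e" using lle by (auto simp: Q_def)
        then have "t * d e \<le> 1 - y e" using 3 t by (intro le_div_pos) auto
        moreover have "t * d e \<ge> 0" using 3 t by simp
        ultimately show ?thesis using e by (auto simp: mv_def U_def)
      qed
    qed
    show "\<forall>v\<in>V. \<not> tv y v \<longrightarrow> (\<Sum>e\<in>delta E v. mv y d t e) \<le> 1"
    proof (intro ballI impI)
      fix v assume v: "v \<in> V" "\<not> tv y v"
      have s: "(\<Sum>e\<in>delta E v. mv y d t e) = yv v + t * sv v" by (simp add: sum_mv yv_def sv_def)
      show "(\<Sum>e\<in>delta E v. mv y d t e) \<le> 1"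
      proof (cases "sv v > 0")
        case True
        then have "v \<in> A3" using v by (simp add: A3_def)
        then have "l \<le> (1 - yv v) / sv v" using lle by (auto simp: Q_def)
        then have "t * sv v \<le> 1 - yv v" using True t by (intro le_div_pos) auto
        then show ?thesis using s by simp
      next
        case False
        then have "t * sv v \<le> 0" using t by (simp add: mult_nonneg_nonpos)
        then show ?thesis using s P_bounds(3)[OF y v(1)] by (simp add: yv_def)
      qed
    qed
    show "\<forall>C\<in>Cs. \<not> tc y C \<and> cycle_edges C \<subseteq> U y \<longrightarrow>
               (\<Sum>e\<in>cycle_edges C. mv y d t e) \<le> (real (length C) - 1) / 2"
    proof (intro ballI impI)
      fix C assume C: "C \<in> Cs" "\<not> tc y C \<and> cycle_edges C \<subseteq> U y"
      have s: "(\<Sum>e\<in>cycle_edges C. mv y d t e) = yc C + t * sc C" by (simp add: sum_mv yc_def sc_def)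
      show "(\<Sum>e\<in>cycle_edges C. mv y d t e) \<le> (real (length C) - 1) / 2"
      proof (cases "sc C > 0")
        case True
        then have "C \<in> A4" using C by (simp add: A4_def)
        then have "l \<le> (bc C - yc C) / sc C" using lle by (auto simp: Q_def)
        then have "t * sc C \<le> bc C - yc C" using True t by (intro le_div_pos) auto
        then show ?thesis using s unfolding bc_def by linarith
      next
        case False
        then have "t * sc C \<le> 0" using t by (simp add: mult_nonneg_nonpos)
        then show ?thesis using s P_bounds(4)[OF y C(1)] by (simp add: yc_def)
      qed
    qed
  qed
  let ?z = "mv y d l"
  note sub = meas_sub[OF g, of l]
  have finNV: "finite (NV y)" using finV by (simp add: NV_def)
  have finNC: "finite (NC y)" using finCs by (simp add: NC_def)
  have c1: "card (U ?z) \<le> card (U y)" using sub(1) finU by (rule card_mono[rotated])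
  have c2: "card (NV ?z) \<le> card (NV y)" using sub(2) finNV by (rule card_mono[rotated])
  have c3: "card (NC ?z) \<le> card (NC y)" using sub(3) finNC by (rule card_mono[rotated])
  have strict: "U ?z \<noteq> U y \<or> NV ?z \<noteq> NV y \<or> NC ?z \<noteq> NC y"
  proof -
    from lQ consider (a) e where "e \<in> A1" "l = y e / (- d e)" | (b) e where "e \<in> A2" "l = (1 - y e) / d e"
      | (c) v where "v \<in> A3" "l = (1 - yv v) / sv v" | (d) C where "C \<in> A4" "l = (bc C - yc C) / sc C"
      unfolding Q_def by blast
    then show ?thesis
    proof cases
      case a
      then have "?z e = 0" by (simp add: mv_def A1_def)
      then have "e \<notin> U ?z" by (simp add: U_def)
      then show ?thesis using a by (auto simp: A1_def)
    next
      case b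
      then have "?z e = 1" by (simp add: mv_def A2_def)
      then have "e \<notin> U ?z" by (simp add: U_def)
      then show ?thesis using b by (auto simp: A2_def)
    next
      case c
      have "(\<Sum>e\<in>delta E v. ?z e) = yv v + l * sv v" by (simp add: sum_mv yv_def sv_def)
      also have "\<dots> = 1" using c by (simp add: A3_def)
      finally have "v \<notin> NV ?z" by (simp add: NV_def tv_def)
      then show ?thesis using c by (auto simp: A3_def NV_def)
    next
      case d
      have "(\<Sum>e\<in>cycle_edges C. ?z e) = yc C + l * sc C" by (simp add: sum_mv yc_def sc_def)
      also have "\<dots> = bc C" using d by (simp add: A4_def)
      finally have tz: "tc ?z C" by (simp add: tc_def bc_def)
      show ?thesis
      proof (cases "cycle_edges C \<subseteq> U ?z")
        case True
        then have "C \<notin> NC ?z" using tz by (simp add: NC_def)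
        then show ?thesis using d by (auto simp: A4_def NC_def)
      next
        case False then show ?thesis using d by (auto simp: A4_def)
      qed
    qed
  qed
  have "card (U ?z) < card (U y) \<or> card (NV ?z) < card (NV y) \<or> card (NC ?z) < card (NC y)"
    using strict sub finU finNV finNC by (meson psubsetI psubset_card_mono)
  then have "meas ?z < meas y" using c1 c2 c3 by (auto simp: meas_def)
  then show ?thesis using lpos feas by blast
qed

end

lemma modinj: assumes "m1 < (n::nat)" "m2 < n" "(p + m1) mod n = (p + m2) mod n" shows "m1 = m2"
proof (rule ccontr)
  assume ne: "m1 \<noteq> m2"
  have key: "False" if "a < b" "b < n" "(p + a) mod n = (p + b) mod n" for a b
  proof -
    have "n dvd (p + b) - (p + a)" using mod_eq_dvd_iff_nat[of "p+a" "p+b" n] that by simp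
    then have "n dvd b - a" by simp
    moreover have "0 < b - a" using that by simp
    ultimately have "n \<le> b - a" by (rule dvd_imp_le)
    then show False using that by linarith
  qed
  consider "m1 < m2" | "m2 < m1" using ne by linarith
  then show False
  proof cases
    case 1 then show ?thesis using key[of m1 m2] assms by simp
  next
    case 2 then show ?thesis using key[of m2 m1] assms by simp
  qed
qed

lemma modsum1: assumes "a < b" "b < (n::nat)" shows "(b + n - a) mod n + (a + n - b) mod n = n"
proof -
  have e: "b + n - a = (b - a) + n" using assms by linarith
  have l: "b - a < n" using assms by linarith
  have 1: "(b + n - a) mod n = b - a" unfolding e mod_add_self2 using l by (rule mod_less)
  have "a + n - b < n" using assms by linarith
  then have "(a + n - b) mod n = a + n - b" by (rule mod_less)
  with 1 show ?thesis using assms by linarith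
qed

lemma modsum: assumes "p < (n::nat)" "q < n" "p \<noteq> q" shows "(q + n - p) mod n + (p + n - q) mod n = n"
proof (cases "p < q")
  case True then show ?thesis using modsum1[of p q n] assms by simp
next
  case False then have "q < p" using assms by linarith
  then show ?thesis using modsum1[of q p n] assms by linarith
qed

lemma modq: assumes "p < (n::nat)" "q < n" shows "(p + (q + n - p) mod n) mod n = q"
proof -
  have "(p + (q + n - p) mod n) mod n = (p + (q + n - p)) mod n" by (simp add: mod_add_right_eq)
  also have "p + (q + n - p) = q + n" using assms by simp
  finally show ?thesis using assms by simp
qed

lemma alt_ones: "(\<Sum>m<N. (-1::real)^m) = (if even N then 0 else 1)"
  by (induction N) auto

lemma card_le2_sub:
  assumes "finite S" "card S \<le> 2" "S \<subseteq> set C" "C \<noteq> []"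
  shows "\<exists>p q. p < length C \<and> q < length C \<and> S \<subseteq> {C!p, C!q}"
proof -
  obtain xs where xs: "set xs = S" "distinct xs" using finite_distinct_list[OF assms(1)] by blast
  have len: "length xs \<le> 2" using xs assms(2) by (metis distinct_card)
  have "\<exists>a b. a \<in> set C \<and> b \<in> set C \<and> S \<subseteq> {a, b}"
  proof (cases xs)
    case Nil
    have "hd C \<in> set C" using assms(4) by simp
    moreover have "S = {}" using Nil xs by simp
    ultimately show ?thesis by blast
  next
    case (Cons a t)
    show ?thesis
    proof (cases t)
      case Nil
      then show ?thesis using Cons xs assms(3) by auto
    next
      case (Cons b t')
      then have "t' = []" using len \<open>xs = a # t\<close> by simp
      then show ?thesis using Cons \<open>xs = a # t\<close> xs assms(3) by auto
    qed
  qed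
  then obtain a b where ab: "a \<in> set C" "b \<in> set C" "S \<subseteq> {a, b}" by blast
  obtain p where p: "p < length C" "C ! p = a" using ab(1) by (auto simp: in_set_conv_nth)
  obtain q where q: "q < length C" "C ! q = b" using ab(2) by (auto simp: in_set_conv_nth)
  show ?thesis using p q ab(3) by blast
qed

context cps begin

definition tvC :: "('a set \<Rightarrow> real) \<Rightarrow> 'a list \<Rightarrow> 'a \<Rightarrow> real" where
  "tvC y C v = 1 - (\<Sum>e\<in>Ev C v. y e)"

lemma tvC_nonneg: "y \<in> P \<Longrightarrow> C \<in> Cs \<Longrightarrow> v \<in> set C \<Longrightarrow> tvC y C v \<ge> 0"
  using Ev_sum_le[OF P_vfeas, of y C v] cyc(4)[of C] by (auto simp: tvC_def)

lemma tvC_sum: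
  assumes y: "y \<in> P" and C: "C \<in> Cs" and t: "tc y C"
  shows "(\<Sum>v\<in>set C. tvC y C v) = 1"
proof -
  have fin: "finite (cycle_edges C)" by (rule finite_cycle_edges)
  have "(\<Sum>v\<in>set C. (\<Sum>e\<in>Ev C v. y e)) = (\<Sum>v\<in>set C. \<Sum>e\<in>{e\<in>cycle_edges C. v \<in> e}. y e)"
    by (simp add: Ev_def)
  also have "\<dots> = (\<Sum>e\<in>cycle_edges C. \<Sum>v\<in>{v\<in>set C. v \<in> e}. y e)"
    using fin by (rule sum.swap_restrict[OF finite_set])
  also have "\<dots> = (\<Sum>e\<in>cycle_edges C. 2 * y e)"
  proof (rule sum.cong[OF refl])
    fix e assume e: "e \<in> cycle_edges C"
    have "{v\<in>set C. v \<in> e} = e" using cycle_edge_subset[OF e] by auto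
    moreover have "card e = 2" using card2 e cyc(5)[OF C] by auto
    ultimately show "(\<Sum>v\<in>{v\<in>set C. v \<in> e}. y e) = 2 * y e" by simp
  qed
  also have "\<dots> = real (length C) - 1" using t by (simp add: tc_def sum_distrib_left[symmetric])
  finally have s: "(\<Sum>v\<in>set C. (\<Sum>e\<in>Ev C v. y e)) = real (length C) - 1" .
  have "(\<Sum>v\<in>set C. tvC y C v) = real (card (set C)) - (\<Sum>v\<in>set C. (\<Sum>e\<in>Ev C v. y e))"
    by (simp add: tvC_def sum_subtractf)
  also have "card (set C) = length C" using cyc(1)[OF C] by (simp add: distinct_card)
  finally show ?thesis using s by simp
qed

lemma tvC_consec:
  assumes "C \<in> Cs"
  shows "tvC y C (C ! (Suc i mod length C)) = 1 - (y (ed C i) + y (ed C (Suc i)))"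
  using Ev_consec[OF cyc(1,2)[OF assms], of i] by (simp add: tvC_def)

lemma alternation:
  assumes y: "y \<in> P" and C: "C \<in> Cs"
  shows "2 * y (ed C j) = 1 - (\<Sum>m<length C. (-1)^m * tvC y C (C ! (Suc (j + m) mod length C)))"
proof -
  let ?n = "length C"
  have odd: "odd ?n" using cyc(3)[OF C] .
  define f where "f m = y (ed C (j + m))" for m
  have "(\<Sum>m<?n. (-1)^m * (f m + f (Suc m))) = f 0 - (-1)^?n * f ?n" by (rule alt_telescope)
  also have "f ?n = f 0" by (simp add: f_def ed_period)
  finally have 1: "(\<Sum>m<?n. (-1)^m * (f m + f (Suc m))) = 2 * y (ed C j)"
    using odd by (simp add: f_def)
  define tt where "tt m = tvC y C (C ! (Suc (j + m) mod ?n))" for m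
  have fm: "f m + f (Suc m) = 1 - tt m" for m
    using tvC_consec[OF C, of y "j + m"] by (simp add: f_def tt_def)
  have "(\<Sum>m<?n. (-1)^m * (f m + f (Suc m))) = (\<Sum>m<?n. (-1::real)^m - (-1)^m * tt m)"
    by (rule sum.cong) (simp_all add: fm algebra_simps)
  also have "\<dots> = (\<Sum>m<?n. (-1::real)^m) - (\<Sum>m<?n. (-1)^m * tt m)"
    by (rule sum_subtractf)
  also have "(\<Sum>m<?n. (-1::real)^m) = 1" using odd by (simp add: alt_ones)
  finally show ?thesis using 1 by (simp add: tt_def)
qed

end

lemma par_helper: "(a::nat) + b = n \<Longrightarrow> odd n \<Longrightarrow> odd a \<Longrightarrow> even b"
  by auto

context cps begin

lemma three_main:
  assumes y: "y \<in> P" and C: "C \<in> Cs" and t: "tc y C" and CU: "cycle_edges C \<subseteq> U y"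
    and p: "p < length C" and q: "q < length C"
    and zero: "\<And>v. v \<in> set C \<Longrightarrow> v \<notin> {C!p, C!q} \<Longrightarrow> tvC y C v = 0"
    and ev: "even ((q + length C - p) mod length C)"
  shows False
proof -
  let ?n = "length C"
  define mq where "mq = (q + ?n - p) mod ?n"
  have n: "?n \<ge> 3" using cyc(2)[OF C] .
  have dist: "distinct C" using cyc(1)[OF C] .
  have n0: "0 < ?n" using n by linarith
  have mq: "mq < ?n" unfolding mq_def using n0 by (rule mod_less_divisor)
  have pmq: "(p + mq) mod ?n = q" using modq[OF p q] by (simp add: mq_def)
  define g where "g m = (-1::real)^m * tvC y C (C ! ((p + m) mod ?n))" for m
  define j where "j = p + ?n - 1"
  have alt: "2 * y (ed C j) = 1 - (\<Sum>m<?n. (-1)^m * tvC y C (C ! (Suc (j + m) mod ?n)))"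
    by (rule alternation[OF y C])
  have "Suc (j + m) = (p + m) + ?n" for m using n by (simp add: j_def)
  then have md: "Suc (j + m) mod ?n = (p + m) mod ?n" for m by (metis mod_add_self2)
  have "(\<Sum>m<?n. (-1)^m * tvC y C (C ! (Suc (j + m) mod ?n))) = (\<Sum>m<?n. g m)"
    by (rule sum.cong) (simp_all add: g_def md)
  then have alt2: "2 * y (ed C j) = 1 - (\<Sum>m<?n. g m)" using alt by simp
  have gz: "g m = 0" if m: "m \<in> {..<?n} - {0, mq}" for m
  proof -
    have m1: "m < ?n" "m \<noteq> 0" "m \<noteq> mq" using m by auto
    have i: "(p + m) mod ?n < ?n" using n0 by (rule mod_less_divisor)
    have "(p + m) mod ?n \<noteq> p"
    proof
      assume "(p + m) mod ?n = p"
      then have "(p + m) mod ?n = (p + 0) mod ?n" using p by simp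
      then have "m = 0" using m1(1) n0 by (intro modinj[of m ?n 0 p]) simp_all
      then show False using m1 by simp
    qed
    moreover have "(p + m) mod ?n \<noteq> q"
    proof
      assume "(p + m) mod ?n = q"
      then have "(p + m) mod ?n = (p + mq) mod ?n" using pmq by simp
      then have "m = mq" using m1(1) mq by (intro modinj[of m ?n mq p]) simp_all
      then show False using m1 by simp
    qed
    ultimately have "C ! ((p + m) mod ?n) \<notin> {C!p, C!q}"
      using dist i p q by (auto simp: nth_eq_iff_index_eq)
    moreover have "C ! ((p + m) mod ?n) \<in> set C" using i by simp
    ultimately show ?thesis using zero by (simp add: g_def)
  qed
  have sumg: "(\<Sum>m<?n. g m) = (\<Sum>m\<in>{0, mq}. g m)"
    by (rule sum.mono_neutral_right) (use mq n gz in auto)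
  have sv: "(\<Sum>v\<in>set C. tvC y C v) = (\<Sum>v\<in>{C!p, C!q}. tvC y C v)"
    by (rule sum.mono_neutral_right) (use p q zero in auto)
  have one: "(\<Sum>v\<in>{C!p, C!q}. tvC y C v) = 1" using tvC_sum[OF y C t] sv by simp
  have "(\<Sum>m<?n. g m) = 1"
  proof (cases "p = q")
    case True
    then have "mq = 0" by (simp add: mq_def)
    then show ?thesis using sumg one True p by (simp add: g_def)
  next
    case False
    have "mq \<noteq> 0"
    proof
      assume "mq = 0" then have "q = p" using pmq p by simp
      then show False using False by simp
    qed
    moreover have "C!p \<noteq> C!q" using False dist p q by (simp add: nth_eq_iff_index_eq)
    ultimately have "(\<Sum>m\<in>{0, mq}. g m) = g 0 + g mq" "(\<Sum>v\<in>{C!p, C!q}. tvC y C v) = tvC y C (C!p) + tvC y C (C!q)"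
      by simp_all
    moreover have "g 0 = tvC y C (C!p)" using p by (simp add: g_def)
    moreover have "even mq" using ev by (simp add: mq_def)
    then have "g mq = tvC y C (C!q)" using pmq by (simp add: g_def)
    ultimately show ?thesis using sumg one by simp
  qed
  then have "y (ed C j) = 0" using alt2 by simp
  moreover have "ed C j \<in> U y" using CU ed_in[OF n0, of j] by auto
  ultimately show False by (simp add: U_def)
qed

lemma three_served:
  assumes y: "y \<in> P" and C: "C \<in> Cs" and t: "tc y C" and CU: "cycle_edges C \<subseteq> U y"
  shows "3 \<le> card {v\<in>V. v \<in> set C \<and> 0 < tvC y C v}"
proof (rule ccontr)
  let ?S = "{v\<in>V. v \<in> set C \<and> 0 < tvC y C v}"
  let ?n = "length C"
  assume "\<not> 3 \<le> card ?S"
  then have c: "card ?S \<le> 2" by simp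
  have n: "?n \<ge> 3" using cyc(2)[OF C] .
  have fin: "finite ?S" using finV by simp
  have sub: "?S \<subseteq> set C" by auto
  have ne: "C \<noteq> []" using n by (cases C) auto
  obtain p q where pq: "p < ?n" "q < ?n" "?S \<subseteq> {C!p, C!q}"
    using card_le2_sub[OF fin c sub ne] by blast
  have zero: "tvC y C v = 0" if "v \<in> set C" "v \<notin> {C!p, C!q}" for v
  proof -
    have "v \<in> V" using that cyc(4)[OF C] by auto
    then have "\<not> 0 < tvC y C v" using that pq(3) by auto
    then show ?thesis using tvC_nonneg[OF y C that(1)] by simp
  qed
  show False
  proof (cases "even ((q + ?n - p) mod ?n)")
    case True
    then show ?thesis using three_main[OF y C t CU pq(1,2) zero] by blast
  next
    case False
    then have "p \<noteq> q" by auto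
    then have "(q + ?n - p) mod ?n + (p + ?n - q) mod ?n = ?n" using modsum pq by blast
    then have "even ((p + ?n - q) mod ?n)" using False cyc(3)[OF C] par_helper by blast
    moreover have "\<And>v. v \<in> set C \<Longrightarrow> v \<notin> {C!q, C!p} \<Longrightarrow> tvC y C v = 0" using zero by auto
    ultimately show ?thesis using three_main[OF y C t CU pq(2,1)] by blast
  qed
qed

end

context cps begin

lemma U_sub_E: "U y \<subseteq> E" by (auto simp: U_def)

lemma tight_U:
  assumes y: "y \<in> P" and v: "v \<in> V" and t: "tv y v" and f: "f \<in> delta E v \<inter> U y"
  shows "\<forall>g\<in>delta E v - U y. y g = 0" "(\<Sum>e\<in>delta E v \<inter> U y. y e) = 1"
proof -
  have nn: "\<And>e. e \<in> delta E v \<Longrightarrow> 0 \<le> y e" using P_bounds(2)[OF y] by (auto simp: delta_def)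
  show g0: "\<forall>g\<in>delta E v - U y. y g = 0"
  proof
    fix g assume g: "g \<in> delta E v - U y"
    have gE: "g \<in> E" using g by (auto simp: delta_def)
    show "y g = 0"
    proof (rule ccontr)
      assume "y g \<noteq> 0"
      then have yg: "y g = 1" using notU[OF y gE] g by auto
      have fg: "f \<noteq> g" using f g by auto
      have "(\<Sum>e\<in>{f, g}. y e) \<le> (\<Sum>e\<in>delta E v. y e)"
        using f g fin_delta nn by (intro sum_mono2) auto
      moreover have "(\<Sum>e\<in>{f, g}. y e) = y f + y g" using fg by simp
      moreover have "y f > 0" using f by (simp add: U_def)
      ultimately show False using yg t by (simp add: tv_def)
    qed
  qed
  have "(\<Sum>e\<in>delta E v. y e) = (\<Sum>e\<in>delta E v \<inter> U y. y e) + (\<Sum>e\<in>delta E v - U y. y e)"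
    using fin_delta by (rule sum.Int_Diff)
  moreover have "(\<Sum>e\<in>delta E v - U y. y e) = 0" using g0 by simp
  ultimately show "(\<Sum>e\<in>delta E v \<inter> U y. y e) = 1" using t by (simp add: tv_def)
qed

lemma D_ge2:
  assumes y: "y \<in> P" and v: "v \<in> V" and t: "tv y v" and ne: "delta E v \<inter> U y \<noteq> {}"
  shows "card (delta E v \<inter> U y) \<ge> 2"
proof (rule ccontr)
  assume "\<not> card (delta E v \<inter> U y) \<ge> 2"
  moreover have "card (delta E v \<inter> U y) \<noteq> 0" using ne fin_delta by auto
  ultimately have "card (delta E v \<inter> U y) = 1" by linarith
  then obtain f where f: "delta E v \<inter> U y = {f}" by (rule card_1_singletonE)
  then have "y f = 1" using tight_U(2)[OF y v t, of f] by auto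
  moreover have "y f < 1" using f by (auto simp: U_def)
  ultimately show False by simp
qed

lemma handshake: "(\<Sum>v\<in>V. card (delta E v \<inter> U y)) = 2 * card (U y)"
proof -
  have "(\<Sum>v\<in>V. card (delta E v \<inter> U y)) = (\<Sum>v\<in>V. \<Sum>e\<in>{e\<in>U y. v \<in> e}. (1::nat))"
  proof (rule sum.cong[OF refl])
    fix v assume "v \<in> V"
    have "delta E v \<inter> U y = {e\<in>U y. v \<in> e}" using U_sub_E by (auto simp: delta_def)
    then show "card (delta E v \<inter> U y) = (\<Sum>e\<in>{e\<in>U y. v \<in> e}. (1::nat))" by simp
  qed
  also have "\<dots> = (\<Sum>e\<in>U y. \<Sum>v\<in>{v\<in>V. v \<in> e}. (1::nat))"
    by (rule sum.swap_restrict[OF finV finU])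
  also have "\<dots> = (\<Sum>e\<in>U y. 2)"
  proof (rule sum.cong[OF refl])
    fix e assume e: "e \<in> U y"
    then have "e \<in> E" using U_sub_E by auto
    then have "{v\<in>V. v \<in> e} = e" "card e = 2" using EV card2 by auto
    then show "(\<Sum>v\<in>{v\<in>V. v \<in> e}. (1::nat)) = 2" by simp
  qed
  finally show ?thesis by simp
qed

definition TT where "TT y = {v\<in>V. tv y v \<and> delta E v \<inter> U y \<noteq> {}}"
definition RR where "RR y = {C\<in>Cs. tc y C \<and> cycle_edges C \<subseteq> U y}"
definition DD where "DD y v = card (delta E v \<inter> U y)"
definition cap where "cap y v = (if v \<in> TT y then DD y v - 2 else DD y v)"

lemma cap_bound:
  assumes y: "y \<in> P" and v: "v \<in> V"
  shows "card {C\<in>RR y. v \<in> set C \<and> 0 < tvC y C v} \<le> cap y v"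
proof -
  define A where "A = {C\<in>RR y. v \<in> set C}"
  define S where "S = {C\<in>RR y. v \<in> set C \<and> 0 < tvC y C v}"
  have finA: "finite A" using finCs by (simp add: A_def RR_def)
  have SA: "S \<subseteq> A" by (auto simp: S_def A_def)
  have cS: "card S \<le> card A" using SA finA by (rule card_mono[rotated])
  have EvU: "Ev C v \<subseteq> delta E v \<inter> U y" if "C \<in> A" for C
    using that Ev_delta[of C v] by (auto simp: A_def RR_def Ev_def)
  have cEv: "card (Ev C v) = 2" if "C \<in> A" for C
    using that card_Ev[OF cyc(1,2)] by (auto simp: A_def RR_def)
  have "card (\<Union>C\<in>A. Ev C v) = (\<Sum>C\<in>A. card (Ev C v))"
  proof (rule card_UN_disjoint[OF finA])
    show "\<forall>C\<in>A. finite (Ev C v)" unfolding Ev_def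
      by (intro ballI finite_subset[OF _ finite_cycle_edges]) auto
    show "\<forall>C\<in>A. \<forall>D\<in>A. C \<noteq> D \<longrightarrow> Ev C v \<inter> Ev D v = {}"
      using disj by (auto simp: A_def RR_def Ev_def)
  qed
  also have "\<dots> = 2 * card A" using cEv by simp
  finally have "2 * card A = card (\<Union>C\<in>A. Ev C v)" by simp
  also have "\<dots> \<le> DD y v" unfolding DD_def using EvU fin_delta
    by (intro card_mono) auto
  finally have A2: "2 * card A \<le> DD y v" .
  show ?thesis
  proof (cases "v \<in> TT y")
    case False then show ?thesis using A2 cS by (simp add: cap_def S_def)
  next
    case True
    show ?thesis
    proof (cases "S = {}")
      case True
      then have "card S = 0" by simp
      then show ?thesis unfolding S_def by simp
    next
      case False
      then obtain C where C: "C \<in> S" by auto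
      then have CA: "C \<in> A" using SA by auto
      have tvv: "tv y v" using True by (simp add: TT_def)
      obtain f where f: "f \<in> Ev C v" using cEv[OF CA] by (metis card.empty ex_in_conv zero_neq_numeral)
      have sum1: "(\<Sum>e\<in>delta E v \<inter> U y. y e) = 1" using tight_U(2)[OF y v tvv, of f] f EvU[OF CA] by auto
      have "(\<Sum>e\<in>Ev C v. y e) < 1" using C by (simp add: S_def tvC_def)
      then have neq: "Ev C v \<noteq> delta E v \<inter> U y" using sum1 by auto
      have "card (Ev C v) < DD y v" unfolding DD_def
        using EvU[OF CA] neq fin_delta by (intro psubset_card_mono) auto
      then have "DD y v \<ge> 3" using cEv[OF CA] by simp
      then show ?thesis using A2 cS True by (simp add: cap_def S_def)
    qed
  qed
qed

lemma counting:
  assumes y: "y \<in> P"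
  shows "3 * card (RR y) \<le> (\<Sum>v\<in>V. cap y v)" "(\<Sum>v\<in>V. cap y v) + 2 * card (TT y) = 2 * card (U y)"
proof -
  have finR: "finite (RR y)" using finCs by (simp add: RR_def)
  have "3 * card (RR y) = (\<Sum>C\<in>RR y. (3::nat))" by simp
  also have "\<dots> \<le> (\<Sum>C\<in>RR y. card {v\<in>V. v \<in> set C \<and> 0 < tvC y C v})"
    by (rule sum_mono) (use three_served[OF y] in \<open>auto simp: RR_def\<close>)
  also have "\<dots> = (\<Sum>C\<in>RR y. \<Sum>v\<in>{v\<in>V. v \<in> set C \<and> 0 < tvC y C v}. (1::nat))" by simp
  also have "\<dots> = (\<Sum>v\<in>V. \<Sum>C\<in>{C\<in>RR y. v \<in> set C \<and> 0 < tvC y C v}. (1::nat))"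
    by (rule sum.swap_restrict[OF finR finV])
  also have "\<dots> = (\<Sum>v\<in>V. card {C\<in>RR y. v \<in> set C \<and> 0 < tvC y C v})" by simp
  also have "\<dots> \<le> (\<Sum>v\<in>V. cap y v)" by (rule sum_mono) (rule cap_bound[OF y])
  finally show "3 * card (RR y) \<le> (\<Sum>v\<in>V. cap y v)" .
  have "(\<Sum>v\<in>V. cap y v) + (\<Sum>v\<in>V. if v \<in> TT y then 2 else 0) = (\<Sum>v\<in>V. DD y v)"
    unfolding sum.distrib[symmetric]
  proof (rule sum.cong[OF refl])
    fix v assume v: "v \<in> V"
    show "cap y v + (if v \<in> TT y then 2 else 0) = DD y v"
    proof (cases "v \<in> TT y")
      case True
      then have "DD y v \<ge> 2" using D_ge2[OF y v] by (simp add: TT_def DD_def)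
      then show ?thesis using True by (simp add: cap_def)
    next
      case False then show ?thesis by (simp add: cap_def)
    qed
  qed
  moreover have "(\<Sum>v\<in>V. if v \<in> TT y then 2 else 0) = (\<Sum>v\<in>{v\<in>V. v \<in> TT y}. (2::nat))"
    by (rule sum.inter_filter[OF finV, symmetric])
  moreover have "{v\<in>V. v \<in> TT y} = TT y" by (auto simp: TT_def)
  moreover have "(\<Sum>v\<in>V. DD y v) = 2 * card (U y)" using handshake by (simp add: DD_def)
  ultimately show "(\<Sum>v\<in>V. cap y v) + 2 * card (TT y) = 2 * card (U y)" by simp
qed

end

context cps begin

lemma sum_delta_U:
  assumes "\<forall>e. e \<notin> U y \<longrightarrow> d e = 0"
  shows "(\<Sum>e\<in>delta E v. d e) = (\<Sum>e\<in>delta E v \<inter> U y. d e)"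
  by (rule sum.mono_neutral_right) (use fin_delta assms in auto)

lemma kernel_good:
  assumes y: "y \<in> P" and nh: "\<not> half_integral E y"
  shows "\<exists>d e0. good y d \<and> d e0 \<noteq> 0"
proof -
  let ?U = "U y" and ?T = "TT y" and ?R = "RR y"
  have finT: "finite ?T" using finV by (simp add: TT_def)
  have finR: "finite ?R" using finCs by (simp add: RR_def)
  note cnt = counting[OF y]
  show ?thesis
  proof (cases "card ?T + card ?R < card ?U")
    case True
    define r :: "('a + 'a list) \<Rightarrow> 'a set \<Rightarrow> real" where
      "r j e = (case j of Inl v \<Rightarrow> if v \<in> e then 1 else 0 | Inr C \<Rightarrow> if e \<in> cycle_edges C then 1 else 0)" for j e
    have "card (?T <+> ?R) < card ?U" using True finT finR by (simp add: card_Plus)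
    then obtain d where d: "\<forall>e. e \<notin> ?U \<longrightarrow> d e = 0" "\<exists>e\<in>?U. d e \<noteq> 0"
        "\<forall>j\<in>?T <+> ?R. (\<Sum>e\<in>?U. r j e * d e) = 0"
      using kernel_exists[OF finU[of y], where J = "?T <+> ?R" and r = r] finT finR by auto
    have gv: "(\<Sum>e\<in>delta E v. d e) = 0" if v: "v \<in> V" "tv y v" for v
    proof (cases "delta E v \<inter> ?U = {}")
      case True then show ?thesis using sum_delta_U[OF d(1)] by simp
    next
      case False
      then have "v \<in> ?T" using v by (simp add: TT_def)
      then have "(\<Sum>e\<in>?U. r (Inl v) e * d e) = 0" using d(3) by auto
      moreover have "(\<Sum>e\<in>?U. r (Inl v) e * d e) = (\<Sum>e\<in>?U. if v \<in> e then d e else 0)"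
        by (rule sum.cong) (auto simp: r_def)
      moreover have "\<dots> = (\<Sum>e\<in>{e\<in>?U. v \<in> e}. d e)" by (rule sum.inter_filter[OF finU, symmetric])
      moreover have "{e\<in>?U. v \<in> e} = delta E v \<inter> ?U" using U_sub_E by (auto simp: delta_def)
      ultimately show ?thesis using sum_delta_U[OF d(1)] by simp
    qed
    have gc: "(\<Sum>e\<in>cycle_edges C. d e) = 0" if C: "C \<in> Cs" "tc y C" "cycle_edges C \<subseteq> ?U" for C
    proof -
      have "C \<in> ?R" using C by (simp add: RR_def)
      then have "(\<Sum>e\<in>?U. r (Inr C) e * d e) = 0" using d(3) by auto
      moreover have "(\<Sum>e\<in>?U. r (Inr C) e * d e) = (\<Sum>e\<in>?U. if e \<in> cycle_edges C then d e else 0)"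
        by (rule sum.cong) (auto simp: r_def)
      moreover have "\<dots> = (\<Sum>e\<in>{e\<in>?U. e \<in> cycle_edges C}. d e)" by (rule sum.inter_filter[OF finU, symmetric])
      moreover have "{e\<in>?U. e \<in> cycle_edges C} = cycle_edges C" using C(3) by auto
      ultimately show ?thesis by simp
    qed
    have "good y d" unfolding good_def using d(1) gv gc by blast
    then show ?thesis using d(2) by blast
  next
    case False
    have R0: "card ?R = 0" and S0: "(\<Sum>v\<in>V. cap y v) = 0" using cnt False by linarith+
    then have Re: "?R = {}" using finR by simp
    have cap0: "cap y v = 0" if "v \<in> V" for v using S0 finV that by simp
    define d where "d e = (if e \<in> ?U then y e - 1/2 else 0)" for e
    have d0: "\<forall>e. e \<notin> ?U \<longrightarrow> d e = 0" by (simp add: d_def)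
    obtain e0 where e0: "e0 \<in> E" "y e0 \<notin> {0, 1/2, 1}" using nh by (auto simp: half_integral_def)
    have "e0 \<in> ?U" using e0 P_bounds(2)[OF y e0(1)] by (auto simp: U_def)
    then have de0: "d e0 \<noteq> 0" using e0 by (simp add: d_def)
    have gv: "(\<Sum>e\<in>delta E v. d e) = 0" if v: "v \<in> V" "tv y v" for v
    proof (cases "delta E v \<inter> ?U = {}")
      case True then show ?thesis using sum_delta_U[OF d0] by simp
    next
      case False
      then have vT: "v \<in> ?T" using v by (simp add: TT_def)
      then have "DD y v \<ge> 2" using D_ge2[OF y v] False by (simp add: DD_def)
      then have c2: "card (delta E v \<inter> ?U) = 2" using cap0[OF v(1)] vT by (simp add: cap_def DD_def)
      obtain f where f: "f \<in> delta E v \<inter> ?U" using False by auto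
      have s1: "(\<Sum>e\<in>delta E v \<inter> ?U. y e) = 1" by (rule tight_U(2)[OF y v f])
      have "(\<Sum>e\<in>delta E v \<inter> ?U. d e) = (\<Sum>e\<in>delta E v \<inter> ?U. y e - 1/2)"
        by (rule sum.cong) (auto simp: d_def)
      also have "\<dots> = (\<Sum>e\<in>delta E v \<inter> ?U. y e) - real (card (delta E v \<inter> ?U)) / 2"
        by (simp add: sum_subtractf)
      finally have "(\<Sum>e\<in>delta E v \<inter> ?U. d e) = 0" using s1 c2 by simp
      then show ?thesis using sum_delta_U[OF d0] by simp
    qed
    have gc: "\<not> (C \<in> Cs \<and> tc y C \<and> cycle_edges C \<subseteq> ?U)" for C
      using Re by (auto simp: RR_def)
    have "good y d" unfolding good_def using d0 gv gc by blast
    then show ?thesis using de0 by blast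
  qed
qed

end

context cps begin

lemma part1: "extreme_point P x \<Longrightarrow> half_integral E x"
proof (rule ccontr)
  assume ex: "extreme_point P x" and nh: "\<not> half_integral E x"
  have x: "x \<in> P" using ex by (simp add: extreme_point_def)
  obtain d e0 where g: "good x d" and nz: "d e0 \<noteq> 0" using kernel_good[OF x nh] by blast
  obtain l1 where l1: "l1 > 0" "\<forall>t. 0 \<le> t \<and> t \<le> l1 \<longrightarrow> mv x d t \<in> P" using move[OF x g nz] by blast
  obtain l2 where l2: "l2 > 0" "\<forall>t. 0 \<le> t \<and> t \<le> l2 \<longrightarrow> mv x (\<lambda>e. - d e) t \<in> P"
    using move[OF x good_neg[OF g], of e0] nz by auto
  define l where "l = min l1 l2"
  have lp: "l > 0" using l1 l2 by (simp add: l_def)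
  define a where "a = mv x d l"
  define b where "b = mv x (\<lambda>e. - d e) l"
  have aP: "a \<in> P" using l1 lp by (simp add: a_def l_def)
  have bP: "b \<in> P" using l2 lp by (simp add: b_def l_def)
  have "b e0 \<noteq> a e0" using lp nz by (simp add: a_def b_def mv_def)
  then have ne: "b \<noteq> a" by auto
  have "x = (\<lambda>e. (1 - 1/2) * b e + (1/2) * a e)"
    by (rule ext) (simp add: a_def b_def mv_def algebra_simps)
  moreover have H: "\<forall>y\<in>P. \<forall>z\<in>P. \<forall>t::real. 0 < t \<and> t < 1 \<and> y \<noteq> z \<longrightarrow> x \<noteq> (\<lambda>e. (1 - t) * y e + t * z e)"
    using ex by (simp add: extreme_point_def)
  have "x \<noteq> (\<lambda>e. (1 - 1/2) * b e + (1/2) * a e)"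
    using H[rule_format, OF bP aP, of "1/2"] ne by simp
  ultimately show False by simp
qed

lemma improve:
  fixes w :: "'a set \<Rightarrow> real"
  shows "y \<in> P \<Longrightarrow> \<exists>r\<in>P. half_integral E r \<and> (\<Sum>e\<in>E. w e * y e) \<le> (\<Sum>e\<in>E. w e * r e)"
proof (induction "meas y" arbitrary: y rule: less_induct)
  case less
  show ?case
  proof (cases "half_integral E y")
    case True then show ?thesis using less.prems by blast
  next
    case False
    obtain d e0 where g: "good y d" and nz: "d e0 \<noteq> 0" using kernel_good[OF less.prems False] by blast
    have "\<exists>d'. good y d' \<and> d' e0 \<noteq> 0 \<and> (\<Sum>e\<in>E. w e * d' e) \<ge> 0"
    proof (cases "(\<Sum>e\<in>E. w e * d e) \<ge> 0")
      case True then show ?thesis using g nz by blast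
    next
      case False
      then have "(\<Sum>e\<in>E. w e * - d e) \<ge> 0" by (simp add: sum_negf)
      then show ?thesis using good_neg[OF g] nz by force
    qed
    then obtain d' where g': "good y d'" "d' e0 \<noteq> 0" "(\<Sum>e\<in>E. w e * d' e) \<ge> 0" by blast
    obtain l where l: "l > 0" "\<forall>t. 0 \<le> t \<and> t \<le> l \<longrightarrow> mv y d' t \<in> P" "meas (mv y d' l) < meas y"
      using move[OF less.prems g'(1,2)] by blast
    have zP: "mv y d' l \<in> P" using l by auto
    obtain r where r: "r \<in> P" "half_integral E r" "(\<Sum>e\<in>E. w e * mv y d' l e) \<le> (\<Sum>e\<in>E. w e * r e)"
      using less.hyps[OF l(3) zP] by blast
    have "(\<Sum>e\<in>E. w e * mv y d' l e) = (\<Sum>e\<in>E. w e * y e) + l * (\<Sum>e\<in>E. w e * d' e)"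
      by (simp add: mv_def algebra_simps sum.distrib sum_distrib_left)
    moreover have "l * (\<Sum>e\<in>E. w e * d' e) \<ge> 0" using l(1) g'(3) by simp
    ultimately show ?thesis using r by (intro bexI[of _ r]) auto
  qed
qed

lemma part2:
  fixes w :: "'a set \<Rightarrow> real"
  shows "\<exists>x\<in>P. half_integral E x \<and> (\<forall>y\<in>P. (\<Sum>e\<in>E. w e * y e) \<le> (\<Sum>e\<in>E. w e * x e))"
proof -
  define H where "H = {r\<in>P. half_integral E r}"
  define obj where "obj r = (\<Sum>e\<in>E. w e * r e)" for r
  have "H \<subseteq> (\<lambda>f e. if e \<in> E then f e else 0) ` (PiE E (\<lambda>_. {0, 1/2, 1::real}))"
  proof
    fix r assume r: "r \<in> H"
    have "r = (\<lambda>e. if e \<in> E then restrict r E e else 0)"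
      using r P_bounds(1)[of r] by (intro ext) (auto simp: H_def restrict_def)
    moreover have "restrict r E \<in> PiE E (\<lambda>_. {0, 1/2, 1::real})"
      using r by (auto simp: H_def half_integral_def)
    ultimately show "r \<in> (\<lambda>f e. if e \<in> E then f e else 0) ` (PiE E (\<lambda>_. {0, 1/2, 1::real}))" by blast
  qed
  then have finH: "finite H" using finite_PiE[OF finE] by (meson finite_imageI finite_insert finite.emptyI finite_subset)
  have zero: "(\<lambda>e. 0::real) \<in> H"
  proof -
    have "(real (length C) - 1) / 2 \<ge> 0" if "C \<in> Cs" for C using cyc(2)[OF that] by simp
    then show ?thesis by (simp add: H_def cycle_polytope_def half_integral_def)
  qed
  then have neH: "H \<noteq> {}" by auto
  have "Max (obj ` H) \<in> obj ` H" using finH neH by (intro Max_in) auto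
  then obtain x where x: "x \<in> H" "obj x = Max (obj ` H)" by auto
  have "obj y \<le> obj x" if y: "y \<in> P" for y
  proof -
    obtain r where r: "r \<in> P" "half_integral E r" "obj y \<le> obj r"
      using improve[OF y, of w] by (auto simp: obj_def)
    have "obj r \<le> Max (obj ` H)" using finH r by (simp add: H_def)
    then show ?thesis using r x by simp
  qed
  then show ?thesis using x by (auto simp: H_def obj_def)
qed

end

theorem mainTheorem3:
  fixes V :: "'a set" and E :: "'a set set" and \<C> :: "'a list set"
  assumes "graph V E"
    and "\<forall>C\<in>\<C>. is_odd_cycle V E C"
    and "\<forall>C\<in>\<C>. \<forall>D\<in>\<C>. C \<noteq> D \<longrightarrow> cycle_edges C \<inter> cycle_edges D = {}"
  shows "(\<forall>x. extreme_point (cycle_polytope V E \<C>) x \<longrightarrow> half_integral E x)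
    \<and> (\<forall>w :: 'a set \<Rightarrow> real. \<exists>x\<in>cycle_polytope V E \<C>. half_integral E x \<and>
          (\<forall>y\<in>cycle_polytope V E \<C>. (\<Sum>e\<in>E. w e * y e) \<le> (\<Sum>e\<in>E. w e * x e)))"
  proof -
  interpret cps V E \<C> using assms by unfold_locales
  show ?thesis using part1 part2 by blast
qed

end
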